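(* Let $n\geq 2$ be an integer. Then \[ s^n+s^{-n}+n(s+s^{-1})\equiv(1+s)^4 r_n(s) \pmod 2\] for some integer Laurent polynomial $r_n(s)\in\mathbb{Z}[s,s^{-1}]$ such that $r_n(1)=n/2$ if $n$ is even and $r_n(1)=0$ if $n$ is odd.
   Context: Congruence modulo $2$ of integer Laurent polynomials means equality of their images in $\mathbb{Z}_2[s,s^{-1}]$ (coefficients reduced mod 2). *)

theory Defs
  imports Main "HOL-Library.Poly_Mapping"
begin

text \<open>Integer Laurent polynomials in one variable s: finitely supported maps
  from exponents (int) to coefficients (int), with convolution product.\<close>
type_synonym laurent = "int \<Rightarrow>\<^sub>0 int"

definition lvar :: laurent
  where "lvar = Poly_Mapping.single 1 1"

definition lvar_inv :: laurent
  where "lvar_inv = Poly_Mapping.single (-1) 1"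

text \<open>Evaluation at s = 1: sum of the coefficients.\<close>
definition leval1 :: "laurent \<Rightarrow> int"
  where "leval1 r = (\<Sum>k\<in>Poly_Mapping.keys r. Poly_Mapping.lookup r k)"

definition lcong2 :: "laurent \<Rightarrow> laurent \<Rightarrow> bool"
  where "lcong2 p q \<longleftrightarrow> (\<forall>k. Poly_Mapping.lookup p k mod 2 = Poly_Mapping.lookup q k mod 2)"

end

theory Submission
  imports Defs
begin

definition c2 :: "'a::comm_ring_1 \<Rightarrow> 'a \<Rightarrow> bool" where
  "c2 a b \<longleftrightarrow> (\<exists>w. a = b + 2 * w)"

lemma c2_refl: "c2 a a" unfolding c2_def by (rule exI[of _ 0]) simp
lemma c2_sym: "c2 a b \<Longrightarrow> c2 b a" unfolding c2_def
proof -
  assume "\<exists>w. a = b + 2 * w"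
  then obtain w where "a = b + 2*w" by blast
  then have "b = a + 2 * (- w)" by simp
  then show "\<exists>w. b = a + 2 * w" by blast
qed
lemma c2_trans: "c2 a b \<Longrightarrow> c2 b c \<Longrightarrow> c2 a c" unfolding c2_def
proof -
  assume "\<exists>w. a = b + 2 * w" "\<exists>w. b = c + 2 * w"
  then obtain w v where "a = b + 2*w" "b = c + 2*v" by blast
  then have "a = c + 2 * (v + w)" by (simp add: algebra_simps)
  then show "\<exists>w. a = c + 2 * w" by blast
qed
lemma c2_mult: "c2 a b \<Longrightarrow> c2 c d \<Longrightarrow> c2 (a * c) (b * d)"
proof -
  assume "c2 a b" "c2 c d"
  then obtain w v where "a = b + 2*w" "c = d + 2*v" unfolding c2_def by blast
  then have "a * c = b * d + 2 * (b*v + w*d + 2*w*v)" by (simp add: algebra_simps)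
  then show ?thesis unfolding c2_def by blast
qed
lemma c2_two: "c2 (2 * x) 0" unfolding c2_def by auto

lemma geo: "(1 - u) * (\<Sum>i<j. u^i) = 1 - (u::'a::comm_ring_1)^j"
proof (induction j)
  case 0 then show ?case by simp
next
  case (Suc j)
  have "(1 - u) * (\<Sum>i<Suc j. u^i) = (1 - u) * (\<Sum>i<j. u^i) + (1 - u) * u^j"
    by (simp add: distrib_left)
  also have "\<dots> = 1 - u^j + (u^j - u * u^j)" using Suc by (simp add: algebra_simps)
  finally show ?case by simp
qed

lemma geo2: "c2 ((1 + u) * (\<Sum>i<j. u^i)) (1 + (u::'a::comm_ring_1)^j)"
proof -
  have "(1 + u) * (\<Sum>i<j. u^i) = (1 - u) * (\<Sum>i<j. u^i) + 2 * (u * (\<Sum>i<j. u^i))"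
    by (simp add: algebra_simps)
  also have "\<dots> = 1 + u^j + 2 * (u * (\<Sum>i<j. u^i) - u^j)" by (simp only: geo) (simp add: algebra_simps)
  finally show ?thesis unfolding c2_def by blast
qed

lemma inv_pow: "s * t = (1::'a::comm_ring_1) \<Longrightarrow> t^a * s^(a+b) = s^b"
proof -
  assume st: "s * t = 1"
  have "t^a * s^(a+b) = (s*t)^a * s^b" by (simp add: power_add power_mult_distrib ac_simps)
  then show ?thesis using st by simp
qed

lemma even_case:
  fixes s t :: "'a::comm_ring_1"
  assumes st: "s * t = 1"
  shows "c2 (s^(2*m) + t^(2*m) + of_nat (2*m) * (s+t)) ((1+s)^4 * (t^(2*m) * (\<Sum>i<m. (s^4)^i)))"
proof -
  let ?G = "\<Sum>i<m. (s^4)^i"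
  have a: "c2 ((1+s)^4) (1 + s^4)"
  proof -
    have "(1+s)^4 = 1 + s^4 + 2*(2*s+3*s^2+2*s^3)" by (simp add: algebra_simps power_numeral_reduce numeral_eq_Suc)
    then show ?thesis unfolding c2_def by blast
  qed
  have F1: "c2 ((1+s)^4 * (t^(2*m) * ?G)) ((1 + s^4) * ?G * t^(2*m))"
    using c2_mult[OF a c2_refl[of "t^(2*m) * ?G"]] by (simp add: ac_simps)
  have F2: "c2 ((1 + s^4) * ?G * t^(2*m)) ((1 + (s^4)^m) * t^(2*m))"
    by (rule c2_mult[OF geo2 c2_refl])
  have F3: "(1 + (s^4)^m) * t^(2*m) = t^(2*m) + s^(2*m)"
  proof -
    have "t^(2*m) * s^(2*m+2*m) = s^(2*m)" by (rule inv_pow[OF st])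
    moreover have "(s^4)^m = s^(2*m+2*m)" by (simp add: power_mult[symmetric])
    ultimately show ?thesis by (simp add: algebra_simps)
  qed
  have F4: "c2 (s^(2*m) + t^(2*m) + of_nat (2*m) * (s+t)) (t^(2*m) + s^(2*m))"
    unfolding c2_def by (rule exI[of _ "of_nat m * (s+t)"]) (simp add: algebra_simps)
  have "c2 ((1+s)^4 * (t^(2*m) * ?G)) (t^(2*m) + s^(2*m))"
    using c2_trans[OF F1 F2] unfolding F3 .
  then show ?thesis by (rule c2_trans[OF F4 c2_sym])
qed

lemma odd_case:
  fixes s t :: "'a::comm_ring_1"
  assumes st: "s * t = 1"
  shows "c2 (s^(2*k+1) + t^(2*k+1) + of_nat (2*k+1) * (s+t))
            ((1+s)^4 * (t^(2*k+1) * (\<Sum>i<k+1. (s^2)^i) * (\<Sum>i<k. (s^2)^i) - of_nat (k*(k+1))))"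
proof -
  let ?A = "\<Sum>i<k+1. (s^2)^i" and ?B = "\<Sum>i<k. (s^2)^i" and ?n = "2*k+1"
  have a: "c2 ((1+s)^4) ((1 + s^2) * (1 + s^2))"
  proof -
    have "(1+s)^4 = (1 + s^2) * (1 + s^2) + 2*(2*s+2*s^2+2*s^3)" by (simp add: algebra_simps power_numeral_reduce numeral_eq_Suc)
    then show ?thesis unfolding c2_def by blast
  qed
  have ev: "even (k*(k+1))" by simp
  then obtain c where c: "k*(k+1) = 2*c" by blast
  have F0: "c2 ((1+s)^4 * (t^?n * ?A * ?B - of_nat (k*(k+1)))) ((1+s)^4 * (t^?n * ?A * ?B))"
    unfolding c2_def by (rule exI[of _ "- ((1+s)^4 * of_nat c)"]) (simp only: c of_nat_mult of_nat_numeral, simp add: algebra_simps)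
  have F1: "c2 ((1+s)^4 * (t^?n * ?A * ?B)) (((1 + s^2) * ?A) * ((1 + s^2) * ?B) * t^?n)"
    using c2_mult[OF a c2_refl[of "t^?n * ?A * ?B"]] by (simp add: ac_simps)
  have F2: "c2 (((1 + s^2) * ?A) * ((1 + s^2) * ?B) * t^?n) ((1 + (s^2)^(k+1)) * (1 + (s^2)^k) * t^?n)"
    by (rule c2_mult[OF c2_mult[OF geo2 geo2] c2_refl])
  have F3: "(1 + (s^2)^(k+1)) * (1 + (s^2)^k) * t^?n = t^?n + t + s + s^?n"
  proof -
    have e1: "t^?n * s^(?n + (?n)) = s^?n" by (rule inv_pow[OF st])
    have e2: "t^?n * s^(2*k + 1 + 1) = s" using inv_pow[OF st, of ?n 1] by simp
    have e3: "t^?n * s^(2*k) = t"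
    proof -
      have "t^?n * s^(2*k) = t * (t^(2*k) * s^(2*k + 0))" by (simp add: ac_simps)
      also have "\<dots> = t" using inv_pow[OF st, of "2*k" 0] by simp
      finally show ?thesis .
    qed
    have "(1 + (s^2)^(k+1)) * (1 + (s^2)^k) * t^?n
        = t^?n + t^?n * s^(2*k) + t^?n * s^(2*k+1+1) + t^?n * s^(?n + ?n)"
      by (simp add: algebra_simps power_mult[symmetric] power_add[symmetric])
    then show ?thesis using e1 e2 e3 by simp
  qed
  have F4: "c2 (s^?n + t^?n + of_nat ?n * (s+t)) (t^?n + t + s + s^?n)"
    unfolding c2_def by (rule exI[of _ "of_nat k * (s+t)"]) (simp add: algebra_simps)
  have "c2 ((1+s)^4 * (t^?n * ?A * ?B - of_nat (k*(k+1)))) (t^?n + t + s + s^?n)"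
    using c2_trans[OF F0 c2_trans[OF F1 F2]] unfolding F3 .
  then show ?thesis by (rule c2_trans[OF F4 c2_sym])
qed

lemma lookup_two_times: "Poly_Mapping.lookup (2 * w :: laurent) k = 2 * Poly_Mapping.lookup w k"
proof -
  have h: "(2 * w :: laurent) = w + w" by (rule mult_2)
  show ?thesis unfolding h lookup_add by simp
qed

lemma c2_lcong2: "c2 p (q::laurent) \<Longrightarrow> lcong2 p q"
  unfolding c2_def lcong2_def by (auto simp: lookup_add lookup_two_times)

lemma leval1_Sum_any: "leval1 r = Sum_any (Poly_Mapping.lookup r)"
  unfolding leval1_def Sum_any.expand_set by (simp add: in_keys_iff[symmetric] Collect_mem_eq)

lemma fin_lookup: "finite {k. Poly_Mapping.lookup (r::laurent) k \<noteq> 0}"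
  using finite_keys[of r] by (simp add: in_keys_iff[symmetric] Collect_mem_eq)

lemma leval1_add: "leval1 (p + q) = leval1 p + leval1 q"
  unfolding leval1_Sum_any lookup_add
  by (rule Sum_any.distrib[OF fin_lookup fin_lookup])

lemma leval1_diff: "leval1 (p - q) = leval1 p - leval1 q"
  using leval1_add[of "p - q" q] by simp

lemma leval1_sum: "leval1 (sum f I) = (\<Sum>i\<in>I. leval1 (f i))"
proof (induction I rule: infinite_finite_induct)
  case (infinite A) then show ?case by (simp add: leval1_def)
next
  case empty then show ?case by (simp add: leval1_def)
next
  case (insert x F) then show ?case by (simp add: leval1_add)
qed

lemma leval1_single: "leval1 (Poly_Mapping.single k c) = c"
  unfolding leval1_def by (cases "c = 0") auto

lemma leval1_of_nat: "leval1 (of_nat N) = int N"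
  by (metis leval1_single single_of_nat of_nat_id)

lemma lvar_pow: "lvar ^ a = Poly_Mapping.single (int a) 1"
  unfolding lvar_def by (induction a) (simp_all add: mult_single add.commute)

lemma lvar_inv_pow: "lvar_inv ^ a = Poly_Mapping.single (- int a) 1"
  unfolding lvar_inv_def by (induction a) (simp_all add: mult_single add.commute)

lemma single_pow: "(Poly_Mapping.single k (1::int)) ^ a = Poly_Mapping.single (int a * k) 1"
  by (induction a) (simp_all add: mult_single algebra_simps)

lemma lvar_inv: "lvar * lvar_inv = 1"
  unfolding lvar_def lvar_inv_def by (simp add: mult_single)

theorem lemma3p12:
  fixes n :: nat
  assumes "n \<ge> 2"
  shows "\<exists>r :: laurent.
           lcong2 (lvar ^ n + lvar_inv ^ n + of_nat n * (lvar + lvar_inv)) ((1 + lvar) ^ 4 * r)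
         \<and> (if even n then 2 * leval1 r = int n else leval1 r = 0)"
proof (cases "even n")
  case True
  then obtain m where n: "n = 2*m" by blast
  let ?r = "lvar_inv^(2*m) * (\<Sum>i<m. (lvar^4)^i)"
  have "leval1 ?r = (\<Sum>i<m. leval1 (lvar_inv^(2*m) * (lvar^4)^i))"
    by (simp add: sum_distrib_left leval1_sum)
  also have "\<dots> = int m"
    by (simp add: lvar_def lvar_inv_def single_pow mult_single leval1_single)
  finally have "2 * leval1 ?r = int n" using n by simp
  moreover have "lcong2 (lvar ^ n + lvar_inv ^ n + of_nat n * (lvar + lvar_inv)) ((1 + lvar) ^ 4 * ?r)"
    unfolding n by (rule c2_lcong2[OF even_case[OF lvar_inv, of m]])
  ultimately have "lcong2 (lvar ^ n + lvar_inv ^ n + of_nat n * (lvar + lvar_inv)) ((1 + lvar) ^ 4 * ?r)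
         \<and> (if even n then 2 * leval1 ?r = int n else leval1 ?r = 0)" using True by simp
  then show ?thesis by (rule exI)
next
  case False
  then obtain k where n: "n = 2*k+1" using oddE by blast
  let ?r = "lvar_inv^(2*k+1) * (\<Sum>i<k+1. (lvar^2)^i) * (\<Sum>i<k. (lvar^2)^i) - of_nat (k*(k+1))"
  have "leval1 (lvar_inv^(2*k+1) * (\<Sum>i<k+1. (lvar^2)^i) * (\<Sum>i<k. (lvar^2)^i))
      = (\<Sum>j<k. \<Sum>i<k+1. leval1 (lvar_inv^(2*k+1) * (lvar^2)^i * (lvar^2)^j))"
    by (simp only: sum_distrib_left sum_distrib_right leval1_sum)
  also have "\<dots> = int ((k+1)*k)"
    by (simp add: lvar_def lvar_inv_def single_pow mult_single leval1_single algebra_simps)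
  finally have "leval1 ?r = 0" unfolding leval1_diff leval1_of_nat by (simp add: algebra_simps)
  moreover have "lcong2 (lvar ^ n + lvar_inv ^ n + of_nat n * (lvar + lvar_inv)) ((1 + lvar) ^ 4 * ?r)"
    unfolding n by (rule c2_lcong2[OF odd_case[OF lvar_inv, of k]])
  ultimately have "lcong2 (lvar ^ n + lvar_inv ^ n + of_nat n * (lvar + lvar_inv)) ((1 + lvar) ^ 4 * ?r)
         \<and> (if even n then 2 * leval1 ?r = int n else leval1 ?r = 0)" using False by simp
  then show ?thesis by (rule exI)
qed

end
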